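(* Assume (R) and (F), let $\alpha\in(0,\infty)^T$, let $u_t(x)=\frac{1}{\alpha_t}[1-\exp(-\alpha_tx)]$ for $t\in\mathbb{T}$, fix initial wealth $w\in\mathbb{R}$, and let $Z\in L^\infty$ have the representation $Z=\sum_{t=1}^T z_t1_{(t-1<\tau\le t)}+z_{T+1}1_{(T<\tau)}$. Then: (a) the indifference price is $H(Z)=\log h_0$; (b) the optimal intertemporal allocation $(X_t)\in\mathcal{A}(w+H(Z)-Z)$ of $w+H(Z)-Z$ (which satisfies $\sum_tE[u_t(\tilde X_t)]=U(w+H(Z)-Z)=U(w)$) is given by $X_1=\frac{B_1}{\alpha_1}\big[\beta_1(w+H(Z))-\beta_1z_1 1_{(0<\tau\le1)}-\beta_1\log h_1\,1_{(1<\tau)}\big]$ and, for $t=2,\dots,T$, $X_t=\frac{B_t}{\alpha_t}\Big[\beta_1(w+H(Z))-\sum_{k=1}^t\beta_kz_k1_{(k-1<\tau\le k)}-\beta_t\log h_t\,1_{(t<\tau)}+\sum_{k=1}^{t-1}\frac{\beta_{k+1}\beta_k}{\alpha_k}\log h_k\,1_{(k<\tau)}\Big]$.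
   Context: Let $T\ge1$, $\mathbb{T}=\{1,\dots,T\}$, and $(\Omega,\mathcal{F},P)$ a probability space carrying a random variable $\tau$ with $\tau(\omega)>0$ for all $\omega$ and $P(\tau=s)=0$ for all $s\in[0,\infty)$. Let $D_t=1_{(\tau\le t)}$ for $t=0,\dots,T$ and $\mathcal{H}_t=\sigma(D_s:s=0,\dots,t)$. Condition (F): the filtration is $\mathcal{F}_t=\mathcal{H}_t$; $L^\infty=L^\infty(\Omega,\mathcal{F}_T,P)$. Condition (R): the interest rates $r_t\ge0$ are deterministic; $B_0=1$, $B_t=\prod_{k=1}^t(1+r_k)$, $\tilde X_t=X_t/B_t$. For $W\in L^\infty$, $\mathcal{A}(W)$ is the set of adapted processes $(Y_t)_{t\in\mathbb{T}}$ with $Y_t\in L^\infty$ and $\sum_{t}\tilde Y_t=W$ a.s.; $U(W)=\sup\{\sum_tE[u_t(\tilde Y_t)]:(Y_t)\in\mathcal{A}(W)\}$; the indifference price $H(Z)$ is the real number with $U(w+H(Z)-Z)=U(w)$. Let $q_t=P(\tau\le t+1\mid\tau>t)$, $p_t=1-q_t$ ($t=0,\dots,T-1$). Define $\beta_t$ by $1/\beta_t=\sum_{k=t}^T1/\alpha_k$, and $h_T=e^{z_{T+1}}$, $h_{t-1}=\big[e^{\beta_tz_t}q_{t-1}+h_t^{\beta_t}p_{t-1}\big]^{1/\beta_t}$ for $t=1,\dots,T$. *)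

theory Defs
  imports "HOL-Probability.Probability"
begin

definition Dproc :: "('a \<Rightarrow> real) \<Rightarrow> nat \<Rightarrow> 'a \<Rightarrow> real" where
  "Dproc \<tau> t \<omega> = (if \<tau> \<omega> \<le> real t then 1 else 0)"

definition filt :: "'a measure \<Rightarrow> ('a \<Rightarrow> real) \<Rightarrow> nat \<Rightarrow> 'a measure" where
  "filt M \<tau> t = sigma (space M)
     (\<Union>s\<in>{0..t}. {(Dproc \<tau> s) -` A \<inter> space M | A. A \<in> sets borel})"

definition Linf :: "'a measure \<Rightarrow> ('a \<Rightarrow> real) \<Rightarrow> nat \<Rightarrow> ('a \<Rightarrow> real) set" where
  "Linf M \<tau> T = {W. W \<in> borel_measurable (filt M \<tau> T) \<and> (\<exists>C. AE \<omega> in M. \<bar>W \<omega>\<bar> \<le> C)}"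

definition disc :: "(nat \<Rightarrow> real) \<Rightarrow> nat \<Rightarrow> real" where
  "disc r t = (\<Prod>k=1..t. 1 + r k)"

definition adm :: "'a measure \<Rightarrow> ('a \<Rightarrow> real) \<Rightarrow> nat \<Rightarrow> (nat \<Rightarrow> real) \<Rightarrow> ('a \<Rightarrow> real)
    \<Rightarrow> (nat \<Rightarrow> 'a \<Rightarrow> real) set" where
  "adm M \<tau> T r W = {Y. (\<forall>t\<in>{1..T}. Y t \<in> borel_measurable (filt M \<tau> t) \<and> Y t \<in> Linf M \<tau> T)
      \<and> (AE \<omega> in M. (\<Sum>t=1..T. Y t \<omega> / disc r t) = W \<omega>)}"

definition EU :: "'a measure \<Rightarrow> nat \<Rightarrow> (nat \<Rightarrow> real) \<Rightarrow> (nat \<Rightarrow> real \<Rightarrow> real)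
    \<Rightarrow> (nat \<Rightarrow> 'a \<Rightarrow> real) \<Rightarrow> real" where
  "EU M T r u Y = (\<Sum>t=1..T. integral\<^sup>L M (\<lambda>\<omega>. u t (Y t \<omega> / disc r t)))"

definition Uval :: "'a measure \<Rightarrow> ('a \<Rightarrow> real) \<Rightarrow> nat \<Rightarrow> (nat \<Rightarrow> real) \<Rightarrow> (nat \<Rightarrow> real \<Rightarrow> real)
    \<Rightarrow> ('a \<Rightarrow> real) \<Rightarrow> real" where
  "Uval M \<tau> T r u W = Sup {EU M T r u Y | Y. Y \<in> adm M \<tau> T r W}"

definition betaw :: "(nat \<Rightarrow> real) \<Rightarrow> nat \<Rightarrow> nat \<Rightarrow> real" where
  "betaw \<alpha> T t = 1 / (\<Sum>k=t..T. 1 / \<alpha> k)"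

text \<open>hh beta q z T n = h_(T-n): h_T = exp z_(T+1),
  h_(t-1) = [exp(beta_t z_t) q_(t-1) + h_t^beta_t p_(t-1)]^(1/beta_t), p = 1 - q.\<close>
primrec hh :: "(nat \<Rightarrow> real) \<Rightarrow> (nat \<Rightarrow> real) \<Rightarrow> (nat \<Rightarrow> real) \<Rightarrow> nat \<Rightarrow> nat \<Rightarrow> real" where
  "hh \<beta> q z T 0 = exp (z (Suc T))"
| "hh \<beta> q z T (Suc n) =
     (exp (\<beta> (T - n) * z (T - n)) * q (T - n - 1)
      + (hh \<beta> q z T n) powr (\<beta> (T - n)) * (1 - q (T - n - 1))) powr (1 / \<beta> (T - n))"

definition qdef :: "'a measure \<Rightarrow> ('a \<Rightarrow> real) \<Rightarrow> nat \<Rightarrow> real" where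
  "qdef M \<tau> t = \<P>(\<omega> in M. \<tau> \<omega> \<le> real t + 1 \<bar> \<tau> \<omega> > real t)"

definition hdef :: "'a measure \<Rightarrow> ('a \<Rightarrow> real) \<Rightarrow> (nat \<Rightarrow> real) \<Rightarrow> (nat \<Rightarrow> real) \<Rightarrow> nat \<Rightarrow> nat \<Rightarrow> real" where
  "hdef M \<tau> \<alpha> z T t = hh (betaw \<alpha> T) (qdef M \<tau>) z T (T - t)"

end

theory Submission
  imports Defs
begin


lemma exp_strict:
  fixes x :: real assumes "x \<noteq> 0" shows "1 + x < exp x"
proof (cases "1 + x / 2 < 0")
  case True
  then have "1 + x < 0" by linarith
  then show ?thesis using exp_gt_zero[of x] by linarith
next
  case False
  have "(1 + x/2)^2 \<le> exp (x/2) ^ 2"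
    using False exp_ge_add_one_self[of "x/2"] by (intro power_mono) auto
  also have "exp (x/2) ^ 2 = exp x"
    by (simp add: power2_eq_square flip: exp_add)
  finally have "(1 + x/2)^2 \<le> exp x" .
  moreover have "1 + x < (1 + x/2)^2"
    using assms by (simp add: power2_eq_square field_simps) (metis not_real_square_gt_zero)
  ultimately show ?thesis by linarith
qed

lemma util_ineq:
  fixes a x y :: real assumes "a > 0"
  shows "(1/a) * (1 - exp (- a * y)) \<le> (1/a) * (1 - exp (- a * x)) + exp (- a * x) * (y - x)"
    and "y \<noteq> x \<Longrightarrow> (1/a) * (1 - exp (- a * y)) < (1/a) * (1 - exp (- a * x)) + exp (- a * x) * (y - x)"
proof -
  have e: "exp (- a * y) = exp (- a * x) * exp (- a * (y - x))"
    by (simp add: algebra_simps flip: exp_add)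
  have 1: "1 + (- a * (y - x)) \<le> exp (- a * (y - x))" by (rule exp_ge_add_one_self)
  have "exp (- a * x) * (1 + (- a * (y - x))) \<le> exp (- a * x) * exp (- a * (y - x))"
    using 1 by (intro mult_left_mono) auto
  then have "exp (- a * x) - exp (- a * y) \<le> a * (exp (- a * x) * (y - x))"
    unfolding e by (simp add: algebra_simps)
  then have "(1/a) * (exp (- a * x) - exp (- a * y)) \<le> (1/a) * (a * (exp (- a * x) * (y - x)))"
    using assms by (intro mult_left_mono) auto
  then show "(1/a) * (1 - exp (- a * y)) \<le> (1/a) * (1 - exp (- a * x)) + exp (- a * x) * (y - x)"
    using assms by (simp add: algebra_simps)
  assume "y \<noteq> x"
  then have "- a * (y - x) \<noteq> 0" using assms by simp
  then have 2: "1 + (- a * (y - x)) < exp (- a * (y - x))" by (rule exp_strict)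
  have "exp (- a * x) * (1 + (- a * (y - x))) < exp (- a * x) * exp (- a * (y - x))"
    using 2 by (intro mult_strict_left_mono) auto
  then have "exp (- a * x) - exp (- a * y) < a * (exp (- a * x) * (y - x))"
    unfolding e by (simp add: algebra_simps)
  then have "(1/a) * (exp (- a * x) - exp (- a * y)) < (1/a) * (a * (exp (- a * x) * (y - x)))"
    using assms by (intro mult_strict_left_mono) auto
  then show "(1/a) * (1 - exp (- a * y)) < (1/a) * (1 - exp (- a * x)) + exp (- a * x) * (y - x)"
    using assms by (simp add: algebra_simps)
qed

lemma hh_pos:
  assumes "\<And>m. 0 \<le> q m \<and> q m \<le> 1"
  shows "0 < hh \<beta> q z T n"
proof (induction n)
  case 0 then show ?case by simp
next
  case (Suc n)
  let ?q = "q (T - n - 1)"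
  have q: "0 \<le> ?q" "?q \<le> 1" using assms by auto
  have a: "0 < hh \<beta> q z T n powr \<beta> (T - n)" using Suc by simp
  have "0 < exp (\<beta> (T - n) * z (T - n)) * ?q + hh \<beta> q z T n powr \<beta> (T - n) * (1 - ?q)"
  proof (cases "?q = 0")
    case True then show ?thesis using a by simp
  next
    case False
    then have "0 < exp (\<beta> (T - n) * z (T - n)) * ?q" using q by simp
    moreover have "0 \<le> hh \<beta> q z T n powr \<beta> (T - n) * (1 - ?q)" using a q by simp
    ultimately show ?thesis by linarith
  qed
  then show ?case by simp
qed

lemma hh_zero: "hh \<beta> q (\<lambda>_. 0) T n = 1"
  by (induction n) auto

lemma betaw_pos:
  assumes "\<forall>t\<in>{1..T}. \<alpha> t > 0" "t \<in> {1..T}"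
  shows "betaw \<alpha> T t > 0"
proof -
  have "0 < (\<Sum>k=t..T. 1 / \<alpha> k)"
    using assms by (intro sum_pos) auto
  then show ?thesis unfolding betaw_def by simp
qed

lemma betaw_rec:
  assumes "1 \<le> t" "t < T"
  shows "1 / betaw \<alpha> T t = 1 / \<alpha> t + 1 / betaw \<alpha> T (t + 1)"
  unfolding betaw_def using assms by (simp add: sum.atLeast_Suc_atMost)

lemma betaw_T: "betaw \<alpha> T T = \<alpha> T"
  unfolding betaw_def by simp

lemma betaw_diff:
  assumes "\<forall>t\<in>{1..T}. \<alpha> t > 0" "1 \<le> k" "k < T"
  shows "betaw \<alpha> T (k+1) * betaw \<alpha> T k / \<alpha> k = betaw \<alpha> T (k+1) - betaw \<alpha> T k"
proof -
  have p1: "betaw \<alpha> T k > 0" "betaw \<alpha> T (k+1) > 0" "\<alpha> k > 0"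
    using assms by (auto intro!: betaw_pos)
  have "1 / betaw \<alpha> T k = 1 / \<alpha> k + 1 / betaw \<alpha> T (k + 1)"
    using assms by (intro betaw_rec) auto
  then show ?thesis using p1 by (simp add: field_simps)
qed


locale mkt = prob_space M for M :: "'a measure" +
  fixes \<tau> :: "'a \<Rightarrow> real" and T :: nat and r \<alpha> :: "nat \<Rightarrow> real"
  assumes T1: "T \<ge> 1"
    and tau_meas[measurable]: "\<tau> \<in> borel_measurable M"
    and tau_pos: "\<forall>\<omega>\<in>space M. \<tau> \<omega> > 0"
    and r_nn: "\<forall>t\<in>{1..T}. r t \<ge> 0"
    and alpha_pos: "\<forall>t\<in>{1..T}. \<alpha> t > 0"
begin

definition "Pg t = prob {\<omega>\<in>space M. real t < \<tau> \<omega>}"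
definition "PA t = prob {\<omega>\<in>space M. real t - 1 < \<tau> \<omega> \<and> \<tau> \<omega> \<le> real t}"
definition "bt t = betaw \<alpha> T t"
definition "hz z t = hdef M \<tau> \<alpha> z T t"
definition "cc z v t = bt 1 * v + (\<Sum>k\<in>{1..<t}. (bt (k+1) - bt k) * ln (hz z k))"
definition "pre z v t = cc z v t - bt t * ln (hz z t)"
definition "ph z v n = cc z v n - bt n * z n"

lemma bt_pos: "t \<in> {1..T} \<Longrightarrow> bt t > 0"
  unfolding bt_def using alpha_pos by (rule betaw_pos)

lemma alpha_pos': "t \<in> {1..T} \<Longrightarrow> \<alpha> t > 0"
  using alpha_pos by auto

lemma q_bounds: "0 \<le> qdef M \<tau> m \<and> qdef M \<tau> m \<le> 1"
proof -
  have m: "{\<omega>\<in>space M. \<tau> \<omega> \<le> real m + 1 \<and> real m < \<tau> \<omega>} \<in> events"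
          "{\<omega>\<in>space M. real m < \<tau> \<omega>} \<in> events" by measurable
  have le: "prob {\<omega>\<in>space M. \<tau> \<omega> \<le> real m + 1 \<and> real m < \<tau> \<omega>} \<le> prob {\<omega>\<in>space M. real m < \<tau> \<omega>}"
    by (rule finite_measure_mono) (use m in auto)
  have q: "qdef M \<tau> m = prob {\<omega>\<in>space M. \<tau> \<omega> \<le> real m + 1 \<and> real m < \<tau> \<omega>} / prob {\<omega>\<in>space M. real m < \<tau> \<omega>}"
    unfolding qdef_def cond_prob_def by simp
  show ?thesis
  proof (cases "prob {\<omega>\<in>space M. real m < \<tau> \<omega>} = 0")
    case True then show ?thesis unfolding q by simp
  next
    case False
    then have "prob {\<omega>\<in>space M. real m < \<tau> \<omega>} > 0" using measure_nonneg[of M] by (metis less_eq_real_def)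
    then show ?thesis unfolding q using le by (simp add: divide_le_eq_1)
  qed
qed

lemma hz_pos: "0 < hz z t"
  unfolding hz_def hdef_def by (rule hh_pos) (rule q_bounds)

lemma hz_zero: "hz (\<lambda>_. 0) t = 1"
  unfolding hz_def hdef_def by (rule hh_zero)

lemma Pg_split: assumes "1 \<le> t" shows "Pg (t-1) = PA t + Pg t"
proof -
  have e: "{\<omega>\<in>space M. real (t-1) < \<tau> \<omega>} = {\<omega>\<in>space M. real t - 1 < \<tau> \<omega> \<and> \<tau> \<omega> \<le> real t} \<union> {\<omega>\<in>space M. real t < \<tau> \<omega>}"
    using assms by (auto simp: of_nat_diff)
  show ?thesis unfolding Pg_def PA_def e
    by (rule finite_measure_Union) auto
qed

lemma q_mult: assumes "1 \<le> t" shows "qdef M \<tau> (t-1) * Pg (t-1) = PA t"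
proof -
  have set: "{\<omega>\<in>space M. \<tau> \<omega> \<le> real (t-1) + 1 \<and> real (t-1) < \<tau> \<omega>} = {\<omega>\<in>space M. real t - 1 < \<tau> \<omega> \<and> \<tau> \<omega> \<le> real t}"
    using assms by (auto simp: of_nat_diff)
  have q: "qdef M \<tau> (t-1) = PA t / Pg (t-1)"
    unfolding qdef_def cond_prob_def PA_def Pg_def by (simp only: set)
  show ?thesis
  proof (cases "Pg (t-1) = 0")
    case True
    have "PA t \<ge> 0" "Pg t \<ge> 0" unfolding PA_def Pg_def by simp_all
    then have "PA t = 0" using True Pg_split[OF assms] by linarith
    then show ?thesis using True by simp
  next
    case False then show ?thesis unfolding q by simp
  qed
qed

lemma Pg0: "Pg 0 = 1"
proof -
  have "{\<omega>\<in>space M. real 0 < \<tau> \<omega>} = space M" using tau_pos by auto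
  then show ?thesis unfolding Pg_def by (simp add: prob_space)
qed

lemma hz_rec:
  assumes "1 \<le> t" "t \<le> T"
  shows "hz z (t-1) powr bt t = exp (bt t * z t) * qdef M \<tau> (t-1) + hz z t powr bt t * (1 - qdef M \<tau> (t-1))"
proof -
  have e1: "T - (t - 1) = Suc (T - t)" using assms by simp
  have e2: "T - (T - t) = t" using assms by simp
  have e3: "T - (T - t) - 1 = t - 1" using assms by simp
  define S where "S = exp (bt t * z t) * qdef M \<tau> (t-1) + hz z t powr bt t * (1 - qdef M \<tau> (t-1))"
  have hz1: "hz z (t-1) = S powr (1 / bt t)"
    unfolding hz_def hdef_def e1 hh.simps e2 e3 S_def bt_def by simp
  have Spos: "S \<ge> 0"
    unfolding S_def using q_bounds[of "t-1"] by (intro add_nonneg_nonneg mult_nonneg_nonneg) auto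
  have "bt t > 0" using assms by (intro bt_pos) auto
  then have "(S powr (1 / bt t)) powr bt t = S" using Spos by (simp add: powr_powr)
  then show ?thesis unfolding hz1 S_def .
qed

lemma cc_Suc: "1 \<le> t \<Longrightarrow> cc z v (t+1) = cc z v t + (bt (t+1) - bt t) * ln (hz z t)"
  unfolding cc_def by (simp add: sum.atLeastLessThan_Suc)

lemma step:
  assumes "t \<in> {1..T}"
  shows "PA t * exp (- ph z v t) + Pg t * exp (- pre z v t) = Pg (t-1) * exp (- (cc z v t - bt t * ln (hz z (t-1))))"
proof -
  define e where "e = exp (- cc z v t)"
  define q where "q = qdef M \<tau> (t-1)"
  define E where "E = exp (bt t * z t)"
  define H where "H = hz z t powr bt t"
  have a1: "exp (- ph z v t) = e * E" unfolding e_def E_def ph_def by (simp flip: exp_add)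
  have a2: "exp (- pre z v t) = e * H" unfolding e_def H_def pre_def using hz_pos[of z t]
    by (simp add: powr_def flip: exp_add)
  have a3: "exp (- (cc z v t - bt t * ln (hz z (t-1)))) = e * (E * q + H * (1 - q))"
  proof -
    have "exp (- (cc z v t - bt t * ln (hz z (t-1)))) = e * hz z (t-1) powr bt t"
      unfolding e_def using hz_pos[of z "t-1"] by (simp add: powr_def flip: exp_add)
    also have "\<dots> = e * (E * q + H * (1 - q))" using assms hz_rec[of t z]
      unfolding E_def q_def H_def by simp
    finally show ?thesis .
  qed
  have b1: "q * Pg (t-1) = PA t" unfolding q_def using assms by (intro q_mult) auto
  have b2: "Pg (t-1) = PA t + Pg t" using assms by (intro Pg_split) auto
  show ?thesis unfolding a1 a2 a3
  proof -
    have "Pg (t - 1) * (e * (E * q + H * (1 - q))) = e * (E * (q * Pg (t-1)) + H * (Pg (t-1) - q * Pg (t-1)))"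
      by (simp only: algebra_simps)
    also have "\<dots> = e * (E * PA t + H * Pg t)"
    proof -
      have b3: "Pg (t-1) - PA t = Pg t" using b2 by linarith
      show ?thesis by (simp only: b1 b3)
    qed
    finally have X: "Pg (t - 1) * (e * (E * q + H * (1 - q))) = e * (E * PA t + H * Pg t)" .
    have Y: "PA t * (e * E) + Pg t * (e * H) = e * (E * PA t + H * Pg t)"
      by (simp only: algebra_simps)
    show "PA t * (e * E) + Pg t * (e * H) = Pg (t - 1) * (e * (E * q + H * (1 - q)))"
      by (rule trans[OF Y X[symmetric]])
  qed
qed

end


lemma ceil_eq_iff_nat: "(x::real) > 0 \<Longrightarrow> (real k - 1 < x \<and> x \<le> real k) \<longleftrightarrow> k = nat \<lceil>x\<rceil>"
proof -
  assume x: "x > 0"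
  have "(real k - 1 < x \<and> x \<le> real k) \<longleftrightarrow> \<lceil>x\<rceil> = int k"
    by (simp add: ceiling_eq_iff)
  also have "\<dots> \<longleftrightarrow> k = nat \<lceil>x\<rceil>" using x by auto
  finally show ?thesis .
qed

lemma less_ceil_nat: "(x::real) > 0 \<Longrightarrow> real k < x \<longleftrightarrow> k < nat \<lceil>x\<rceil>"
proof -
  assume x: "x > 0"
  have "real k < x \<longleftrightarrow> int k < \<lceil>x\<rceil>" by (simp add: less_ceiling_iff)
  also have "\<dots> \<longleftrightarrow> k < nat \<lceil>x\<rceil>" using x by auto
  finally show ?thesis .
qed

lemma ceil_nat_ge1: "(x::real) > 0 \<Longrightarrow> 1 \<le> nat \<lceil>x\<rceil>"
  by (simp add: Suc_le_eq)

lemma ceil_nat_le: "(x::real) > 0 \<Longrightarrow> x \<le> real t \<Longrightarrow> nat \<lceil>x\<rceil> \<le> t"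
proof -
  assume "x \<le> real t"
  then have "\<lceil>x\<rceil> \<le> int t" by (simp add: ceiling_le_iff)
  then show ?thesis by (simp only: nat_le_iff)
qed

context mkt
begin

lemma meas_N[measurable]: "(\<lambda>\<omega>. (f::nat \<Rightarrow> real) (nat \<lceil>\<tau> \<omega>\<rceil>)) \<in> borel_measurable M"
  by measurable

definition "gf z v t \<omega> = exp (- (if real t < \<tau> \<omega> then pre z v t else ph z v (nat \<lceil>\<tau> \<omega>\<rceil>)))"
definition "rho z v \<omega> = (if real T < \<tau> \<omega> then exp (- pre z v T) else exp (- ph z v (nat \<lceil>\<tau> \<omega>\<rceil>)))"
definition "Kb z v = (\<Sum>n\<in>{1..T}. exp (- pre z v n)) + (\<Sum>n\<in>{1..T}. exp (- ph z v n))"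

lemma gf_meas[measurable]: "gf z v t \<in> borel_measurable M"
  unfolding gf_def by measurable

lemma rho_meas[measurable]: "rho z v \<in> borel_measurable M"
  unfolding rho_def by measurable

lemma Kb_le1: "n \<in> {1..T} \<Longrightarrow> exp (- pre z v n) \<le> Kb z v"
proof -
  assume n: "n \<in> {1..T}"
  have "exp (- pre z v n) \<le> (\<Sum>n\<in>{1..T}. exp (- pre z v n))"
    using n by (intro member_le_sum) auto
  moreover have "0 \<le> (\<Sum>n\<in>{1..T}. exp (- ph z v n))" by (intro sum_nonneg) auto
  ultimately show ?thesis unfolding Kb_def by linarith
qed

lemma Kb_le2: "n \<in> {1..T} \<Longrightarrow> exp (- ph z v n) \<le> Kb z v"
proof -
  assume n: "n \<in> {1..T}"
  have "exp (- ph z v n) \<le> (\<Sum>n\<in>{1..T}. exp (- ph z v n))"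
    using n by (intro member_le_sum) auto
  moreover have "0 \<le> (\<Sum>n\<in>{1..T}. exp (- pre z v n))" by (intro sum_nonneg) auto
  ultimately show ?thesis unfolding Kb_def by linarith
qed

lemma gf_bound: "t \<in> {1..T} \<Longrightarrow> \<omega> \<in> space M \<Longrightarrow> norm (gf z v t \<omega>) \<le> Kb z v"
proof -
  assume t: "t \<in> {1..T}" and w: "\<omega> \<in> space M"
  have tp: "\<tau> \<omega> > 0" using w tau_pos by auto
  show ?thesis
  proof (cases "real t < \<tau> \<omega>")
    case True then show ?thesis unfolding gf_def using Kb_le1[OF t] by simp
  next
    case False
    then have "nat \<lceil>\<tau> \<omega>\<rceil> \<in> {1..T}" using t tp ceil_nat_ge1 ceil_nat_le[of "\<tau> \<omega>" t] by auto
    then show ?thesis unfolding gf_def using False Kb_le2 by simp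
  qed
qed

lemma rho_bound: "\<omega> \<in> space M \<Longrightarrow> norm (rho z v \<omega>) \<le> Kb z v"
proof -
  assume w: "\<omega> \<in> space M"
  have tp: "\<tau> \<omega> > 0" using w tau_pos by auto
  show ?thesis
  proof (cases "real T < \<tau> \<omega>")
    case True then show ?thesis unfolding rho_def using Kb_le1[of T] T1 by simp
  next
    case False
    then have "nat \<lceil>\<tau> \<omega>\<rceil> \<in> {1..T}" using tp ceil_nat_ge1 ceil_nat_le[of "\<tau> \<omega>" T] by auto
    then show ?thesis unfolding rho_def using False Kb_le2 by simp
  qed
qed

lemma int_gf: "t \<in> {1..T} \<Longrightarrow> integrable M (gf z v t)"
proof -
  assume t: "t \<in> {1..T}"
  have "AE \<omega> in M. norm (gf z v t \<omega>) \<le> Kb z v" using gf_bound[OF t] by (intro AE_I2)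
  then show ?thesis using gf_meas by (rule integrable_const_bound)
qed

lemma int_rho: "integrable M (rho z v)"
proof -
  have "AE \<omega> in M. norm (rho z v \<omega>) \<le> Kb z v" using rho_bound by (intro AE_I2)
  then show ?thesis using rho_meas by (rule integrable_const_bound)
qed

end


context mkt
begin

lemma int_prod:
  fixes g D :: "'a \<Rightarrow> real"
  assumes [measurable]: "g \<in> borel_measurable M" "D \<in> borel_measurable M"
    and gb: "\<And>\<omega>. \<omega> \<in> space M \<Longrightarrow> norm (g \<omega>) \<le> K"
    and Db: "AE \<omega> in M. norm (D \<omega>) \<le> (C::real)"
  shows "integrable M (\<lambda>\<omega>. g \<omega> * D \<omega>)"
proof -
  have "AE \<omega> in M. norm (g \<omega> * D \<omega>) \<le> K * C"
    using Db AE_space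
  proof eventually_elim
    case (elim \<omega>)
    have "norm (g \<omega> * D \<omega>) = norm (g \<omega>) * norm (D \<omega>)" by (simp add: abs_mult)
    also have "\<dots> \<le> K * C" using gb[OF elim(2)] elim(1) by (intro mult_mono) auto
    finally show ?case .
  qed
  then show ?thesis by (rule integrable_const_bound) measurable
qed

lemma int_ind: "A \<in> sets M \<Longrightarrow> integrable M (indicator A :: 'a \<Rightarrow> real)"
  by (rule integrable_real_indicator) (simp_all add: emeasure_eq_measure)

lemma Sgt_sets[measurable]: "{\<omega>\<in>space M. real t < \<tau> \<omega>} \<in> sets M"
  by measurable

lemma rho_tail:
  assumes "t \<in> {1..T}"
  shows "integral\<^sup>L M (\<lambda>\<omega>. rho z v \<omega> * indicator {\<omega>\<in>space M. real t < \<tau> \<omega>} \<omega>) = Pg t * exp (- pre z v t)"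
proof -
  have main: "\<forall>t. T - t = m \<longrightarrow> t \<in> {1..T} \<longrightarrow>
     integral\<^sup>L M (\<lambda>\<omega>. rho z v \<omega> * indicator {\<omega>\<in>space M. real t < \<tau> \<omega>} \<omega>) = Pg t * exp (- pre z v t)" for m
  proof (induction m)
    case 0
    show ?case
    proof (intro allI impI)
      fix t assume "T - t = 0" "t \<in> {1..T}"
      then have tT: "t = T" by auto
      have "integral\<^sup>L M (\<lambda>\<omega>. rho z v \<omega> * indicator {\<omega>\<in>space M. real t < \<tau> \<omega>} \<omega>)
          = integral\<^sup>L M (\<lambda>\<omega>. exp (- pre z v T) * indicator {\<omega>\<in>space M. real t < \<tau> \<omega>} \<omega>)"
        by (rule Bochner_Integration.integral_cong) (auto simp: rho_def indicator_def tT)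
      also have "\<dots> = Pg t * exp (- pre z v t)"
        unfolding Pg_def tT by (simp add: Int_absorb2 Collect_restrict)
      finally show "integral\<^sup>L M (\<lambda>\<omega>. rho z v \<omega> * indicator {\<omega>\<in>space M. real t < \<tau> \<omega>} \<omega>) = Pg t * exp (- pre z v t)" .
    qed
  next
    case (Suc m)
    show ?case
    proof (intro allI impI)
      fix t assume tm: "T - t = Suc m" and t: "t \<in> {1..T}"
      then have tT: "t < T" "T - (t+1) = m" "t + 1 \<in> {1..T}" by auto
      have IH: "integral\<^sup>L M (\<lambda>\<omega>. rho z v \<omega> * indicator {\<omega>\<in>space M. real (t+1) < \<tau> \<omega>} \<omega>) = Pg (t+1) * exp (- pre z v (t+1))"
        using Suc.IH tT by blast
      define A where "A = {\<omega>\<in>space M. real (t+1) - 1 < \<tau> \<omega> \<and> \<tau> \<omega> \<le> real (t+1)}"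
      have A[measurable]: "A \<in> sets M" unfolding A_def by measurable
      have pw: "rho z v \<omega> * indicator {\<omega>\<in>space M. real t < \<tau> \<omega>} \<omega>
          = exp (- ph z v (t+1)) * indicator A \<omega> + rho z v \<omega> * indicator {\<omega>\<in>space M. real (t+1) < \<tau> \<omega>} \<omega>"
        if w: "\<omega> \<in> space M" for \<omega>
      proof -
        have tp: "\<tau> \<omega> > 0" using w tau_pos by auto
        consider "\<tau> \<omega> \<le> real t" | "real t < \<tau> \<omega> \<and> \<tau> \<omega> \<le> real (t+1)" | "real (t+1) < \<tau> \<omega>" by linarith
        then show ?thesis
        proof cases
          case 1 then show ?thesis using w by (auto simp: indicator_def A_def)
        next
          case 2
          then have N: "nat \<lceil>\<tau> \<omega>\<rceil> = t + 1" using ceil_eq_iff_nat[OF tp, of "t+1"] by simp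
          have nT: "\<not> real T < \<tau> \<omega>" using 2 tT by (simp add: of_nat_less_iff)
          show ?thesis using 2 w nT unfolding rho_def N by (auto simp: indicator_def A_def)
        next
          case 3 then show ?thesis using w by (auto simp: indicator_def A_def)
        qed
      qed
      have "integral\<^sup>L M (\<lambda>\<omega>. rho z v \<omega> * indicator {\<omega>\<in>space M. real t < \<tau> \<omega>} \<omega>)
         = integral\<^sup>L M (\<lambda>\<omega>. exp (- ph z v (t+1)) * indicator A \<omega> + rho z v \<omega> * indicator {\<omega>\<in>space M. real (t+1) < \<tau> \<omega>} \<omega>)"
        by (rule Bochner_Integration.integral_cong[OF refl pw])
      also have "\<dots> = exp (- ph z v (t+1)) * PA (t+1) + Pg (t+1) * exp (- pre z v (t+1))"
      proof -
        have i1: "integrable M (\<lambda>\<omega>. exp (- ph z v (t+1)) * indicator A \<omega>)" using int_ind[OF A] by simp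
        have i2: "integrable M (\<lambda>\<omega>. rho z v \<omega> * indicator {\<omega>\<in>space M. real (t+1) < \<tau> \<omega>} \<omega>)"
          by (rule integrable_real_mult_indicator) (simp_all add: int_rho del: of_nat_add)
        have X: "integral\<^sup>L M (\<lambda>\<omega>. exp (- ph z v (t+1)) * indicator A \<omega>) = exp (- ph z v (t+1)) * PA (t+1)"
          unfolding PA_def A_def by (simp add: Int_absorb2 Collect_restrict del: of_nat_add)
        have e: "integral\<^sup>L M (\<lambda>\<omega>. exp (- ph z v (t+1)) * indicator A \<omega> + rho z v \<omega> * indicator {\<omega>\<in>space M. real (t+1) < \<tau> \<omega>} \<omega>)
          = integral\<^sup>L M (\<lambda>\<omega>. exp (- ph z v (t+1)) * indicator A \<omega>) + integral\<^sup>L M (\<lambda>\<omega>. rho z v \<omega> * indicator {\<omega>\<in>space M. real (t+1) < \<tau> \<omega>} \<omega>)"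
          by (rule Bochner_Integration.integral_add[OF i1 i2])
        show ?thesis by (simp only: e X IH)
      qed
      also have "\<dots> = Pg t * exp (- (cc z v (t+1) - bt (t+1) * ln (hz z t)))"
        using step[of "t+1" z v] tT by (simp add: mult.commute del: of_nat_add)
      also have "cc z v (t+1) - bt (t+1) * ln (hz z t) = pre z v t"
        using cc_Suc[of t z v] t unfolding pre_def by (simp add: algebra_simps)
      finally show "integral\<^sup>L M (\<lambda>\<omega>. rho z v \<omega> * indicator {\<omega>\<in>space M. real t < \<tau> \<omega>} \<omega>) = Pg t * exp (- pre z v t)" .
    qed
  qed
  show ?thesis using main assms by blast
qed

end


context mkt
begin

lemma gf_rho:
  fixes D :: "'a \<Rightarrow> real"
  assumes t: "t \<in> {1..T}" and Dm[measurable]: "D \<in> borel_measurable M"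
    and Db: "AE \<omega> in M. norm (D \<omega>) \<le> C"
    and cst: "\<forall>\<omega>\<in>space M. real t < \<tau> \<omega> \<longrightarrow> D \<omega> = d"
  shows "integral\<^sup>L M (\<lambda>\<omega>. gf z v t \<omega> * D \<omega>) = integral\<^sup>L M (\<lambda>\<omega>. rho z v \<omega> * D \<omega>)"
proof -
  define S where "S = {\<omega>\<in>space M. real t < \<tau> \<omega>}"
  have S[measurable]: "S \<in> sets M" unfolding S_def by measurable
  have pw: "gf z v t \<omega> * D \<omega> = rho z v \<omega> * D \<omega> + d * (exp (- pre z v t) * indicator S \<omega> - rho z v \<omega> * indicator S \<omega>)"
    if w: "\<omega> \<in> space M" for \<omega>
  proof (cases "real t < \<tau> \<omega>")
    case True then show ?thesis using cst w by (simp add: gf_def indicator_def S_def algebra_simps)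
  next
    case False
    have "\<not> real T < \<tau> \<omega>" using False t by auto
    then have "gf z v t \<omega> = rho z v \<omega>" using False unfolding gf_def rho_def by simp
    then show ?thesis using False w by (simp add: indicator_def S_def)
  qed
  have i1: "integrable M (\<lambda>\<omega>. rho z v \<omega> * D \<omega>)"
    by (rule int_prod[OF rho_meas Dm rho_bound Db])
  have i2: "integrable M (\<lambda>\<omega>. exp (- pre z v t) * indicator S \<omega>)" using int_ind[OF S] by simp
  have i3: "integrable M (\<lambda>\<omega>. rho z v \<omega> * indicator S \<omega>)"
    by (rule integrable_real_mult_indicator) (auto simp: int_rho)
  have "integral\<^sup>L M (\<lambda>\<omega>. gf z v t \<omega> * D \<omega>)
     = integral\<^sup>L M (\<lambda>\<omega>. rho z v \<omega> * D \<omega> + d * (exp (- pre z v t) * indicator S \<omega> - rho z v \<omega> * indicator S \<omega>))"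
    by (rule Bochner_Integration.integral_cong[OF refl pw])
  also have "\<dots> = integral\<^sup>L M (\<lambda>\<omega>. rho z v \<omega> * D \<omega>) + d * (integral\<^sup>L M (\<lambda>\<omega>. exp (- pre z v t) * indicator S \<omega>) - integral\<^sup>L M (\<lambda>\<omega>. rho z v \<omega> * indicator S \<omega>))"
    using i1 i2 i3 by simp
  also have "integral\<^sup>L M (\<lambda>\<omega>. exp (- pre z v t) * indicator S \<omega>) = exp (- pre z v t) * Pg t"
    unfolding Pg_def S_def by (simp add: Int_absorb2 Collect_restrict)
  also have "integral\<^sup>L M (\<lambda>\<omega>. rho z v \<omega> * indicator S \<omega>) = Pg t * exp (- pre z v t)"
    unfolding S_def using t by (rule rho_tail)
  finally show ?thesis by simp
qed

lemma int_gf_rho: "t \<in> {1..T} \<Longrightarrow> integral\<^sup>L M (gf z v t) = integral\<^sup>L M (rho z v)"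
  using gf_rho[of t "\<lambda>_. 1" 1 1 z v] by simp

lemma rho_val: "integral\<^sup>L M (rho z v) = exp (- (bt 1 * v - bt 1 * ln (hz z 0)))"
proof -
  have t1: "1 \<in> {1..T}" using T1 by auto
  define A where "A = {\<omega>\<in>space M. real 1 - 1 < \<tau> \<omega> \<and> \<tau> \<omega> \<le> real 1}"
  define S where "S = {\<omega>\<in>space M. real 1 < \<tau> \<omega>}"
  have A[measurable]: "A \<in> sets M" unfolding A_def by measurable
  have S[measurable]: "S \<in> sets M" unfolding S_def by measurable
  have pw: "gf z v 1 \<omega> = exp (- ph z v 1) * indicator A \<omega> + exp (- pre z v 1) * indicator S \<omega>"
    if w: "\<omega> \<in> space M" for \<omega>
  proof (cases "1 < \<tau> \<omega>")
    case True then show ?thesis using w by (simp add: gf_def indicator_def A_def S_def)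
  next
    case False
    have tp: "\<tau> \<omega> > 0" using w tau_pos by auto
    then have N: "nat \<lceil>\<tau> \<omega>\<rceil> = 1" using False ceil_eq_iff_nat[OF tp, of 1] by simp
    show ?thesis using False w tp unfolding gf_def N by (simp add: indicator_def A_def S_def)
  qed
  have "integral\<^sup>L M (rho z v) = integral\<^sup>L M (gf z v 1)" using int_gf_rho[OF t1] by simp
  also have "\<dots> = integral\<^sup>L M (\<lambda>\<omega>. exp (- ph z v 1) * indicator A \<omega> + exp (- pre z v 1) * indicator S \<omega>)"
    by (rule Bochner_Integration.integral_cong[OF refl pw])
  also have "\<dots> = exp (- ph z v 1) * measure M A + exp (- pre z v 1) * measure M S"
    using int_ind[OF A] int_ind[OF S] A S by (simp add: sets.Int_space_eq2)
  also have "\<dots> = exp (- ph z v 1) * PA 1 + exp (- pre z v 1) * Pg 1"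
    unfolding PA_def Pg_def A_def S_def by simp
  also have "\<dots> = Pg 0 * exp (- (cc z v 1 - bt 1 * ln (hz z 0)))"
    using step[OF t1, of z v] by (simp add: mult.commute)
  also have "\<dots> = exp (- (bt 1 * v - bt 1 * ln (hz z 0)))"
    unfolding Pg0 cc_def by simp
  finally show ?thesis .
qed

end


lemma filt_space: "space (filt M \<tau> t) = space M"
  unfolding filt_def by (simp add: space_measure_of_conv)

lemma filt_sets: "sets (filt M \<tau> t) = sigma_sets (space M) (\<Union>s\<in>{0..t}. {(Dproc \<tau> s) -` A \<inter> space M | A. A \<in> sets borel})"
  unfolding filt_def by (rule sets_measure_of) auto

lemma Dproc_filt: "s \<le> t \<Longrightarrow> Dproc \<tau> s \<in> borel_measurable (filt M \<tau> t)"
proof (rule measurableI)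
  fix x show "Dproc \<tau> s x \<in> space borel" by simp
next
  fix A :: "real set" assume A: "A \<in> sets borel" and st: "s \<le> t"
  show "Dproc \<tau> s -` A \<inter> space (filt M \<tau> t) \<in> sets (filt M \<tau> t)"
    unfolding filt_sets filt_space
  proof (rule sigma_sets.Basic)
    have "Dproc \<tau> s -` A \<inter> space M \<in> {(Dproc \<tau> s) -` B \<inter> space M | B. B \<in> sets borel}"
      using A by blast
    then show "Dproc \<tau> s -` A \<inter> space M \<in> (\<Union>s\<in>{0..t}. {(Dproc \<tau> s) -` A \<inter> space M | A. A \<in> sets borel})"
      using st by (intro UN_I[of s]) auto
  qed
qed

lemma Dproc_meas: "\<tau> \<in> borel_measurable M \<Longrightarrow> Dproc \<tau> s \<in> borel_measurable M"
  unfolding Dproc_def by measurable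

lemma filt_sub: "\<tau> \<in> borel_measurable M \<Longrightarrow> sets (filt M \<tau> t) \<subseteq> sets M"
  unfolding filt_sets
proof (rule sets.sigma_sets_subset)
  assume tm: "\<tau> \<in> borel_measurable M"
  show "(\<Union>s\<in>{0..t}. {(Dproc \<tau> s) -` A \<inter> space M | A. A \<in> sets borel}) \<subseteq> sets M"
    using measurable_sets[OF Dproc_meas[OF tm]] by auto
qed

lemma filt_meas_M: "\<tau> \<in> borel_measurable M \<Longrightarrow> f \<in> borel_measurable (filt M \<tau> t) \<Longrightarrow> f \<in> borel_measurable M"
  by (rule measurable_from_subalg[of M "filt M \<tau> t"]) (auto simp: subalgebra_def filt_space filt_sub)

lemma filt_const:
  assumes f: "f \<in> borel_measurable (filt M \<tau> t)"
  shows "\<exists>d. \<forall>\<omega>\<in>space M. real t < \<tau> \<omega> \<longrightarrow> f \<omega> = (d::real)"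
proof -
  define R where "R = {\<omega>\<in>space M. real t < \<tau> \<omega>}"
  define G where "G = (\<Union>s\<in>{0..t}. {(Dproc \<tau> s) -` A \<inter> space M | A. A \<in> sets borel})"
  have inv: "\<forall>\<omega>\<in>R. \<forall>\<omega>'\<in>R. (\<omega> \<in> S \<longleftrightarrow> \<omega>' \<in> S)" if "S \<in> sigma_sets (space M) G" for S
    using that
  proof (induction rule: sigma_sets.induct)
    case (Basic a)
    then obtain s A where sA: "s \<le> t" "a = Dproc \<tau> s -` A \<inter> space M" unfolding G_def by auto
    have "Dproc \<tau> s \<omega> = 0" if "\<omega> \<in> R" for \<omega>
      using that sA(1) unfolding R_def Dproc_def by auto
    then show ?case using sA(2) unfolding R_def by auto
  next
    case Empty then show ?case by simp
  next
    case (Compl a)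
    show ?case
    proof (intro ballI)
      fix \<omega> \<omega>' assume w: "\<omega> \<in> R" "\<omega>' \<in> R"
      have "(\<omega> \<in> a) = (\<omega>' \<in> a)" using bspec[OF bspec[OF Compl.IH w(1)] w(2)] .
      moreover have "\<omega> \<in> space M" "\<omega>' \<in> space M" using w unfolding R_def by auto
      ultimately show "(\<omega> \<in> space M - a) = (\<omega>' \<in> space M - a)" by simp
    qed
  next
    case (Union a)
    show ?case
    proof (intro ballI)
      fix \<omega> \<omega>' assume w: "\<omega> \<in> R" "\<omega>' \<in> R"
      have "\<And>i. (\<omega> \<in> a i) = (\<omega>' \<in> a i)" using bspec[OF bspec[OF Union.IH w(1)] w(2)] .
      then show "(\<omega> \<in> \<Union> (range a)) = (\<omega>' \<in> \<Union> (range a))" by simp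
    qed
  qed
  show ?thesis
  proof (cases "R = {}")
    case True then show ?thesis unfolding R_def by auto
  next
    case False
    then obtain \<omega>0 where w0: "\<omega>0 \<in> R" by auto
    define S where "S = f -` {f \<omega>0} \<inter> space (filt M \<tau> t)"
    have "S \<in> sets (filt M \<tau> t)" unfolding S_def by (rule measurable_sets[OF f]) simp
    then have S: "S \<in> sigma_sets (space M) G" unfolding filt_sets G_def .
    have "\<omega>0 \<in> S" using w0 unfolding S_def R_def filt_space by auto
    then have "\<forall>\<omega>\<in>R. \<omega> \<in> S" using inv[OF S] w0 by blast
    then show ?thesis unfolding S_def R_def by (intro exI[of _ "f \<omega>0"]) auto
  qed
qed


lemma sum_ind1:
  fixes x :: real assumes x: "x > 0"
  shows "(\<Sum>k=1..t. f k * (if real k - 1 < x \<and> x \<le> real k then 1 else 0)) = (if nat \<lceil>x\<rceil> \<le> t then f (nat \<lceil>x\<rceil>) else (0::real))"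
proof -
  have "(\<Sum>k=1..t. f k * (if real k - 1 < x \<and> x \<le> real k then 1 else 0)) = (\<Sum>k\<in>{1..t}. if k = nat \<lceil>x\<rceil> then f k else 0)"
    by (rule sum.cong) (auto simp: ceil_eq_iff_nat[OF x])
  also have "\<dots> = (if nat \<lceil>x\<rceil> \<in> {1..t} then f (nat \<lceil>x\<rceil>) else 0)"
    by (rule sum.delta) simp
  finally show ?thesis using ceil_nat_ge1[OF x] by auto
qed

lemma sum_ind2:
  fixes x :: real assumes x: "x > 0" and t: "1 \<le> t"
  shows "(\<Sum>k=1..t-1. f k * (if real k < x then 1 else 0)) = (\<Sum>k\<in>{1..<min t (nat \<lceil>x\<rceil>)}. (f k::real))"
proof -
  have e: "{1..t-1} = {1..<t}" using t by auto
  have "(\<Sum>k=1..t-1. f k * (if real k < x then 1 else 0)) = (\<Sum>k\<in>{1..<t}. if k \<in> {..<nat \<lceil>x\<rceil>} then f k else 0)"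
    unfolding e by (rule sum.cong) (auto simp: less_ceil_nat[OF x])
  also have "\<dots> = sum f ({1..<t} \<inter> {..<nat \<lceil>x\<rceil>})"
    by (rule sum.inter_restrict[symmetric]) simp
  also have "{1..<t} \<inter> {..<nat \<lceil>x\<rceil>} = {1..<min t (nat \<lceil>x\<rceil>)}" by auto
  finally show ?thesis .
qed

context mkt
begin

definition "Zf (z :: nat \<Rightarrow> real) \<omega> = (\<Sum>t=1..T. z t * (if real t - 1 < \<tau> \<omega> \<and> \<tau> \<omega> \<le> real t then 1 else 0))
                    + z (T + 1) * (if real T < \<tau> \<omega> then 1 else 0)"

definition "Xf z v t \<omega> = disc r t / \<alpha> t *
              (bt 1 * v
               - (\<Sum>k=1..t. bt k * z k * (if real k - 1 < \<tau> \<omega> \<and> \<tau> \<omega> \<le> real k then 1 else 0))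
               - bt t * ln (hz z t) * (if real t < \<tau> \<omega> then 1 else 0)
               + (\<Sum>k=1..t-1. bt (k + 1) * bt k / \<alpha> k * ln (hz z k) * (if real k < \<tau> \<omega> then 1 else 0)))"

definition "uf = (\<lambda>t x. (1 / \<alpha> t) * (1 - exp (- \<alpha> t * x)))"

lemma disc_pos: "t \<in> {1..T} \<Longrightarrow> disc r t > 0"
  unfolding disc_def using r_nn by (intro prod_pos) (auto simp: add_pos_nonneg)

lemma PX:
  assumes w: "\<omega> \<in> space M" and t: "t \<in> {1..T}"
  shows "Xf z v t \<omega> / disc r t = (if real t < \<tau> \<omega> then pre z v t else ph z v (nat \<lceil>\<tau> \<omega>\<rceil>)) / \<alpha> t"
proof -
  define x where "x = \<tau> \<omega>"
  define N where "N = nat \<lceil>x\<rceil>"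
  have x: "x > 0" using w tau_pos unfolding x_def by auto
  have N1: "1 \<le> N" unfolding N_def using ceil_nat_ge1[OF x] .
  define I where "I = bt 1 * v
               - (\<Sum>k=1..t. bt k * z k * (if real k - 1 < x \<and> x \<le> real k then 1 else 0))
               - bt t * ln (hz z t) * (if real t < x then 1 else 0)
               + (\<Sum>k=1..t-1. bt (k + 1) * bt k / \<alpha> k * ln (hz z k) * (if real k < x then 1 else 0))"
  have XI: "Xf z v t \<omega> = disc r t / \<alpha> t * I" unfolding Xf_def I_def x_def by simp
  have S1: "(\<Sum>k=1..t. bt k * z k * (if real k - 1 < x \<and> x \<le> real k then 1 else 0)) = (if N \<le> t then bt N * z N else 0)"
    unfolding N_def by (rule sum_ind1[OF x])
  have S2: "(\<Sum>k=1..t-1. bt (k + 1) * bt k / \<alpha> k * ln (hz z k) * (if real k < x then 1 else 0))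
      = (\<Sum>k\<in>{1..<min t N}. (bt (k+1) - bt k) * ln (hz z k))"
  proof -
    have "(\<Sum>k=1..t-1. bt (k + 1) * bt k / \<alpha> k * ln (hz z k) * (if real k < x then 1 else 0))
        = (\<Sum>k\<in>{1..<min t N}. bt (k + 1) * bt k / \<alpha> k * ln (hz z k))"
      unfolding N_def using t by (intro sum_ind2[OF x]) auto
    also have "\<dots> = (\<Sum>k\<in>{1..<min t N}. (bt (k+1) - bt k) * ln (hz z k))"
    proof (rule sum.cong)
      fix k assume k: "k \<in> {1..<min t N}"
      then have "bt (k + 1) * bt k / \<alpha> k = bt (k+1) - bt k"
        unfolding bt_def using t by (intro betaw_diff[OF alpha_pos]) auto
      then show "bt (k + 1) * bt k / \<alpha> k * ln (hz z k) = (bt (k+1) - bt k) * ln (hz z k)" by simp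
    qed simp
    finally show ?thesis .
  qed
  have "I = (if real t < x then pre z v t else ph z v N)"
  proof (cases "real t < x")
    case True
    have "t < N" unfolding N_def using iffD1[OF less_ceil_nat[OF x, of t] True] .
    then show ?thesis using True unfolding I_def S1 S2 pre_def cc_def by simp
  next
    case False
    have "\<not> t < N" unfolding N_def using False less_ceil_nat[OF x, of t] by blast
    then have "N \<le> t" by simp
    then show ?thesis using False unfolding I_def S1 S2 ph_def cc_def by (simp add: min_absorb2)
  qed
  then show ?thesis unfolding XI x_def N_def using disc_pos[OF t] by simp
qed

lemma ZX:
  assumes w: "\<omega> \<in> space M"
  shows "Zf z \<omega> = (if real T < \<tau> \<omega> then z (T + 1) else z (nat \<lceil>\<tau> \<omega>\<rceil>))"
proof -
  have x: "\<tau> \<omega> > 0" using w tau_pos by auto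
  have "(nat \<lceil>\<tau> \<omega>\<rceil> \<le> T) \<longleftrightarrow> \<not> real T < \<tau> \<omega>" using less_ceil_nat[OF x, of T] by auto
  moreover have S: "(\<Sum>t=1..T. z t * (if real t - 1 < \<tau> \<omega> \<and> \<tau> \<omega> \<le> real t then 1 else 0)) = (if nat \<lceil>\<tau> \<omega>\<rceil> \<le> T then z (nat \<lceil>\<tau> \<omega>\<rceil>) else 0)"
    using sum_ind1[OF x, of z T] .
  ultimately show ?thesis unfolding Zf_def S by auto
qed

lemma budget_alg: "N \<in> {1..T} \<Longrightarrow> (\<Sum>t\<in>{1..<N}. pre z v t / \<alpha> t) + cc z v N / bt N = v"
proof (induction N)
  case 0 then show ?case by simp
next
  case (Suc N)
  show ?case
  proof (cases "N = 0")
    case True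
    have "bt 1 > 0" using T1 by (intro bt_pos) auto
    then show ?thesis using True unfolding cc_def by simp
  next
    case False
    then have N: "N \<in> {1..T}" "1 \<le> N" "N < T" using Suc.prems by auto
    have IH: "(\<Sum>t\<in>{1..<N}. pre z v t / \<alpha> t) + cc z v N / bt N = v" using Suc.IH N by blast
    have rec: "1 / bt N = 1 / \<alpha> N + 1 / bt (N + 1)" unfolding bt_def using N by (intro betaw_rec) auto
    have p: "bt N > 0" "bt (N+1) > 0" "\<alpha> N > 0" using N by (auto intro!: bt_pos alpha_pos')
    have key: "pre z v N / \<alpha> N + cc z v (N+1) / bt (N+1) = cc z v N / bt N"
    proof -
      define L where "L = ln (hz z N)"
      define C where "C = cc z v N"
      have c1: "cc z v (N+1) = C + (bt (N+1) - bt N) * L" unfolding C_def L_def using cc_Suc N by simp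
      have c2: "pre z v N = C - bt N * L" unfolding pre_def C_def L_def ..
      have "pre z v N / \<alpha> N + cc z v (N+1) / bt (N+1) = C * (1 / \<alpha> N + 1 / bt (N+1)) + L * (1 - bt N * (1 / \<alpha> N + 1 / bt (N+1)))"
        unfolding c1 c2 using p by (simp add: field_simps)
      also have "\<dots> = C / bt N" unfolding rec[symmetric] using p by simp
      finally show ?thesis unfolding C_def .
    qed
    have "(\<Sum>t\<in>{1..<Suc N}. pre z v t / \<alpha> t) = (\<Sum>t\<in>{1..<N}. pre z v t / \<alpha> t) + pre z v N / \<alpha> N"
      using N by (simp add: sum.atLeastLessThan_Suc)
    then show ?thesis using IH key by simp
  qed
qed

lemma hzT: "hz z T = exp (z (T + 1))"
  unfolding hz_def hdef_def by simp

lemma budget_pt: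
  assumes w: "\<omega> \<in> space M"
  shows "(\<Sum>t=1..T. Xf z v t \<omega> / disc r t) = v - Zf z \<omega>"
proof -
  define x where "x = \<tau> \<omega>"
  define N where "N = nat \<lceil>x\<rceil>"
  have x: "x > 0" using w tau_pos unfolding x_def by auto
  have N1: "1 \<le> N" unfolding N_def using ceil_nat_ge1[OF x] .
  have "(\<Sum>t=1..T. Xf z v t \<omega> / disc r t) = (\<Sum>t=1..T. (if real t < x then pre z v t else ph z v N) / \<alpha> t)"
    by (rule sum.cong) (auto simp: PX[OF w] x_def N_def)
  also have "\<dots> = v - Zf z \<omega>"
  proof (cases "real T < x")
    case True
    have "(\<Sum>t=1..T. (if real t < x then pre z v t else ph z v N) / \<alpha> t) = (\<Sum>t\<in>{1..<T}. pre z v t / \<alpha> t) + pre z v T / \<alpha> T"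
    proof -
      have "(\<Sum>t=1..T. (if real t < x then pre z v t else ph z v N) / \<alpha> t) = (\<Sum>t=1..T. pre z v t / \<alpha> t)"
        using True by (intro sum.cong) auto
      also have "\<dots> = (\<Sum>t\<in>{1..<T}. pre z v t / \<alpha> t) + pre z v T / \<alpha> T"
      proof -
        have e: "{1..T} = insert T {1..<T}" using T1 by auto
        show ?thesis unfolding e by (simp add: add.commute)
      qed
      finally show ?thesis .
    qed
    also have "(\<Sum>t\<in>{1..<T}. pre z v t / \<alpha> t) = v - cc z v T / bt T" using budget_alg[of T z v] T1 by simp
    also have "bt T = \<alpha> T" unfolding bt_def by (rule betaw_T)
    also have "v - cc z v T / \<alpha> T + pre z v T / \<alpha> T = v - z (T+1)"
    proof -
      have aT: "\<alpha> T > 0" using T1 by (intro alpha_pos') auto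
      show ?thesis using aT unfolding pre_def hzT bt_def betaw_T by (simp add: field_simps)
    qed
    finally show ?thesis using ZX[OF w] True x_def by simp
  next
    case False
    then have NT: "N \<le> T" unfolding N_def using less_ceil_nat[OF x, of T] by simp
    have e: "{1..T} = {1..<N} \<union> {N..T}" using N1 NT by auto
    have lt: "real t < x \<longleftrightarrow> t < N" for t unfolding N_def by (rule less_ceil_nat[OF x])
    have "(\<Sum>t=1..T. (if real t < x then pre z v t else ph z v N) / \<alpha> t)
        = (\<Sum>t\<in>{1..<N}. (if real t < x then pre z v t else ph z v N) / \<alpha> t) + (\<Sum>t\<in>{N..T}. (if real t < x then pre z v t else ph z v N) / \<alpha> t)"
      unfolding e by (rule sum.union_disjoint) auto
    also have "(\<Sum>t\<in>{1..<N}. (if real t < x then pre z v t else ph z v N) / \<alpha> t) = (\<Sum>t\<in>{1..<N}. pre z v t / \<alpha> t)"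
      by (rule sum.cong) (auto simp: lt)
    also have "(\<Sum>t\<in>{N..T}. (if real t < x then pre z v t else ph z v N) / \<alpha> t) = ph z v N * (\<Sum>t\<in>{N..T}. 1 / \<alpha> t)"
      unfolding sum_distrib_left by (rule sum.cong) (auto simp: lt)
    also have "(\<Sum>t\<in>{N..T}. 1 / \<alpha> t) = 1 / bt N" unfolding bt_def betaw_def by simp
    also have "ph z v N * (1 / bt N) = cc z v N / bt N - z N"
    proof -
      have "bt N > 0" using N1 NT by (intro bt_pos) auto
      then show ?thesis unfolding ph_def by (simp add: field_simps)
    qed
    also have "(\<Sum>t\<in>{1..<N}. pre z v t / \<alpha> t) + (cc z v N / bt N - z N) = v - z N"
      using budget_alg[of N z v] N1 NT by simp
    finally show ?thesis using ZX[OF w] False x_def N_def by simp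
  qed
  finally show ?thesis .
qed

end


lemma uf_bound:
  fixes a y B :: real assumes a: "a > 0" and y: "\<bar>y\<bar> \<le> B"
  shows "\<bar>(1/a) * (1 - exp (- a * y))\<bar> \<le> (1/a) * (1 + exp (a * B))"
proof -
  have "- y \<le> B" using y by linarith
  then have "a * (- y) \<le> a * B" using a by (intro mult_left_mono) auto
  then have "- a * y \<le> a * B" by simp
  then have e: "exp (- a * y) \<le> exp (a * B)" by simp
  have "\<bar>1 - exp (- a * y)\<bar> \<le> 1 + exp (a * B)" using e exp_gt_zero[of "- a * y"] by linarith
  then have "(1/a) * \<bar>1 - exp (- a * y)\<bar> \<le> (1/a) * (1 + exp (a * B))"
    using a by (intro mult_left_mono) auto
  then show ?thesis using a by (simp add: abs_mult)
qed

context mkt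
begin

lemma Xf_D: "Xf z v t = (\<lambda>\<omega>. disc r t / \<alpha> t *
              (bt 1 * v
               - (\<Sum>k=1..t. bt k * z k * (Dproc \<tau> k \<omega> - Dproc \<tau> (k - 1) \<omega>))
               - bt t * ln (hz z t) * (1 - Dproc \<tau> t \<omega>)
               + (\<Sum>k=1..t-1. bt (k + 1) * bt k / \<alpha> k * ln (hz z k) * (1 - Dproc \<tau> k \<omega>))))"
proof (rule ext)
  fix \<omega>
  have i1: "(if real k - 1 < \<tau> \<omega> \<and> \<tau> \<omega> \<le> real k then 1 else 0) = Dproc \<tau> k \<omega> - Dproc \<tau> (k - 1) \<omega>"
    if "k \<in> {1..t}" for k using that by (auto simp: Dproc_def of_nat_diff)
  have i2: "(if real k < \<tau> \<omega> then 1 else 0) = 1 - Dproc \<tau> k \<omega>" for k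
    by (auto simp: Dproc_def)
  have s1: "(\<Sum>k=1..t. bt k * z k * (if real k - 1 < \<tau> \<omega> \<and> \<tau> \<omega> \<le> real k then 1 else 0))
      = (\<Sum>k=1..t. bt k * z k * (Dproc \<tau> k \<omega> - Dproc \<tau> (k - 1) \<omega>))"
    by (rule sum.cong) (simp_all add: i1)
  show "Xf z v t \<omega> = disc r t / \<alpha> t *
              (bt 1 * v
               - (\<Sum>k=1..t. bt k * z k * (Dproc \<tau> k \<omega> - Dproc \<tau> (k - 1) \<omega>))
               - bt t * ln (hz z t) * (1 - Dproc \<tau> t \<omega>)
               + (\<Sum>k=1..t-1. bt (k + 1) * bt k / \<alpha> k * ln (hz z k) * (1 - Dproc \<tau> k \<omega>)))"
    unfolding Xf_def s1 i2 ..
qed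

lemma Xf_filt: "t \<le> s \<Longrightarrow> Xf z v t \<in> borel_measurable (filt M \<tau> s)"
proof -
  assume ts: "t \<le> s"
  have Dm: "\<And>k. k \<le> s \<Longrightarrow> Dproc \<tau> k \<in> borel_measurable (filt M \<tau> s)" by (rule Dproc_filt)
  show ?thesis unfolding Xf_D
    by (intro borel_measurable_times borel_measurable_diff borel_measurable_add borel_measurable_sum
        borel_measurable_const Dm) (use ts in auto)
qed

lemma Xf_meas[measurable]: "Xf z v t \<in> borel_measurable M"
  by (rule filt_meas_M[OF tau_meas Xf_filt[of t t]]) simp

definition "Kx z v t = (\<bar>pre z v t\<bar> + (\<Sum>n\<in>{1..T}. \<bar>ph z v n\<bar>)) / \<alpha> t"

lemma x_bound:
  assumes w: "\<omega> \<in> space M" and t: "t \<in> {1..T}"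
  shows "\<bar>Xf z v t \<omega> / disc r t\<bar> \<le> Kx z v t"
proof -
  have x: "\<tau> \<omega> > 0" using w tau_pos by auto
  have a: "\<alpha> t > 0" using t by (rule alpha_pos')
  have s0: "0 \<le> (\<Sum>n\<in>{1..T}. \<bar>ph z v n\<bar>)" by (intro sum_nonneg) auto
  define V where "V = (if real t < \<tau> \<omega> then pre z v t else ph z v (nat \<lceil>\<tau> \<omega>\<rceil>))"
  define K where "K = \<bar>pre z v t\<bar> + (\<Sum>n\<in>{1..T}. \<bar>ph z v n\<bar>)"
  have hV: "\<bar>V\<bar> \<le> K"
  proof (cases "real t < \<tau> \<omega>")
    case True then show ?thesis using s0 unfolding V_def K_def by simp
  next
    case False
    then have "nat \<lceil>\<tau> \<omega>\<rceil> \<in> {1..T}" using t ceil_nat_ge1[OF x] ceil_nat_le[OF x, of t] by auto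
    then have "\<bar>ph z v (nat \<lceil>\<tau> \<omega>\<rceil>)\<bar> \<le> (\<Sum>n\<in>{1..T}. \<bar>ph z v n\<bar>)"
      by (intro member_le_sum) auto
    then show ?thesis using False unfolding V_def K_def by simp
  qed
  have e: "Xf z v t \<omega> / disc r t = V / \<alpha> t" unfolding V_def by (rule PX[OF w t])
  have "\<bar>V / \<alpha> t\<bar> = \<bar>V\<bar> / \<alpha> t" using a by (simp add: abs_div)
  also have "\<dots> \<le> K / \<alpha> t" using hV a by (intro divide_right_mono) auto
  finally show ?thesis unfolding e Kx_def K_def .
qed

lemma Xf_bound:
  assumes w: "\<omega> \<in> space M" and t: "t \<in> {1..T}"
  shows "\<bar>Xf z v t \<omega>\<bar> \<le> disc r t * Kx z v t"
proof -
  have d: "disc r t > 0" using disc_pos[OF t] .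
  have "\<bar>Xf z v t \<omega>\<bar> = disc r t * \<bar>Xf z v t \<omega> / disc r t\<bar>" using d by (simp add: abs_div)
  also have "\<dots> \<le> disc r t * Kx z v t" using x_bound[OF w t] d by (intro mult_left_mono) auto
  finally show ?thesis .
qed

lemma X_adm: "Xf z v \<in> adm M \<tau> T r (\<lambda>\<omega>. v - Zf z \<omega>)"
  unfolding adm_def Linf_def
proof (intro CollectI conjI ballI)
  fix t assume t: "t \<in> {1..T}"
  show "Xf z v t \<in> borel_measurable (filt M \<tau> t)" by (rule Xf_filt) simp
  show "Xf z v t \<in> borel_measurable (filt M \<tau> T)" using t by (intro Xf_filt) auto
  show "\<exists>C. AE \<omega> in M. \<bar>Xf z v t \<omega>\<bar> \<le> C"
    by (intro exI[of _ "disc r t * Kx z v t"] AE_I2 Xf_bound t)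
next
  show "AE \<omega> in M. (\<Sum>t = 1..T. Xf z v t \<omega> / disc r t) = v - Zf z \<omega>"
    by (intro AE_I2 budget_pt)
qed

lemma uf_X: "\<omega> \<in> space M \<Longrightarrow> t \<in> {1..T} \<Longrightarrow> uf t (Xf z v t \<omega> / disc r t) = 1 / \<alpha> t * (1 - gf z v t \<omega>)"
  unfolding uf_def gf_def by (simp add: PX alpha_pos')

lemma gfX:
  assumes w: "\<omega> \<in> space M" and t: "t \<in> {1..T}"
  shows "exp (- \<alpha> t * (Xf z v t \<omega> / disc r t)) = gf z v t \<omega>"
proof -
  have a: "\<alpha> t \<noteq> 0" using alpha_pos'[OF t] by simp
  show ?thesis unfolding gf_def PX[OF w t] using a by simp
qed

lemma X_EU: "EU M T r uf (Xf z v) = (\<Sum>t=1..T. 1 / \<alpha> t) * (1 - exp (- (bt 1 * v - bt 1 * ln (hz z 0))))"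
proof -
  have "integral\<^sup>L M (\<lambda>\<omega>. uf t (Xf z v t \<omega> / disc r t)) = 1 / \<alpha> t * (1 - exp (- (bt 1 * v - bt 1 * ln (hz z 0))))"
    if t: "t \<in> {1..T}" for t
  proof -
    have "integral\<^sup>L M (\<lambda>\<omega>. uf t (Xf z v t \<omega> / disc r t)) = integral\<^sup>L M (\<lambda>\<omega>. 1 / \<alpha> t * (1 - gf z v t \<omega>))"
      by (rule Bochner_Integration.integral_cong[OF refl]) (rule uf_X[OF _ t])
    also have "\<dots> = 1 / \<alpha> t * (1 - integral\<^sup>L M (gf z v t))"
      using int_gf[OF t] by (simp add: prob_space)
    also have "integral\<^sup>L M (gf z v t) = exp (- (bt 1 * v - bt 1 * ln (hz z 0)))"
      using int_gf_rho[OF t] rho_val by simp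
    finally show ?thesis .
  qed
  then have "EU M T r uf (Xf z v) = (\<Sum>t=1..T. 1 / \<alpha> t * (1 - exp (- (bt 1 * v - bt 1 * ln (hz z 0)))))"
    unfolding EU_def by (intro sum.cong) auto
  then show ?thesis by (simp add: sum_distrib_right)
qed

end


context mkt
begin

lemma one_t:
  assumes Y: "Y \<in> adm M \<tau> T r W" and t: "t \<in> {1..T}"
  shows "integrable M (\<lambda>\<omega>. uf t (Y t \<omega> / disc r t))"
    and "integrable M (\<lambda>\<omega>. uf t (Xf z v t \<omega> / disc r t))"
    and "integrable M (\<lambda>\<omega>. rho z v \<omega> * (Y t \<omega> / disc r t - Xf z v t \<omega> / disc r t))"
    and "integrable M (\<lambda>\<omega>. uf t (Y t \<omega> / disc r t) - uf t (Xf z v t \<omega> / disc r t)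
            - gf z v t \<omega> * (Y t \<omega> / disc r t - Xf z v t \<omega> / disc r t))"
    and "integral\<^sup>L M (\<lambda>\<omega>. uf t (Y t \<omega> / disc r t) - uf t (Xf z v t \<omega> / disc r t)
            - gf z v t \<omega> * (Y t \<omega> / disc r t - Xf z v t \<omega> / disc r t))
         = integral\<^sup>L M (\<lambda>\<omega>. uf t (Y t \<omega> / disc r t)) - integral\<^sup>L M (\<lambda>\<omega>. uf t (Xf z v t \<omega> / disc r t))
            - integral\<^sup>L M (\<lambda>\<omega>. rho z v \<omega> * (Y t \<omega> / disc r t - Xf z v t \<omega> / disc r t))"
    and "\<forall>\<omega>\<in>space M. uf t (Y t \<omega> / disc r t) - uf t (Xf z v t \<omega> / disc r t)
            - gf z v t \<omega> * (Y t \<omega> / disc r t - Xf z v t \<omega> / disc r t) \<le> 0"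
    and "\<forall>\<omega>\<in>space M. uf t (Y t \<omega> / disc r t) - uf t (Xf z v t \<omega> / disc r t)
            - gf z v t \<omega> * (Y t \<omega> / disc r t - Xf z v t \<omega> / disc r t) = 0 \<longrightarrow> Y t \<omega> = Xf z v t \<omega>"
proof -
  have Yf: "Y t \<in> borel_measurable (filt M \<tau> t)" and YL: "Y t \<in> Linf M \<tau> T"
    using Y t unfolding adm_def by auto
  have Ym[measurable]: "Y t \<in> borel_measurable M"
    using YL unfolding Linf_def by (auto intro: filt_meas_M[OF tau_meas])
  obtain C where C: "AE \<omega> in M. \<bar>Y t \<omega>\<bar> \<le> C" using YL unfolding Linf_def by auto
  obtain d where d: "\<forall>\<omega>\<in>space M. real t < \<tau> \<omega> \<longrightarrow> Y t \<omega> = d" using filt_const[OF Yf] by auto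
  have dp: "disc r t > 0" using disc_pos[OF t] .
  have a: "\<alpha> t > 0" using alpha_pos'[OF t] .
  define D where "D = (\<lambda>\<omega>. Y t \<omega> / disc r t - Xf z v t \<omega> / disc r t)"
  have Dm[measurable]: "D \<in> borel_measurable M" unfolding D_def by measurable
  have yb: "AE \<omega> in M. \<bar>Y t \<omega> / disc r t\<bar> \<le> C / disc r t"
    using C by eventually_elim (use dp in \<open>simp add: abs_div divide_right_mono\<close>)
  have Db: "AE \<omega> in M. norm (D \<omega>) \<le> C / disc r t + Kx z v t"
    using yb AE_space
  proof eventually_elim
    case (elim \<omega>)
    have "\<bar>D \<omega>\<bar> \<le> \<bar>Y t \<omega> / disc r t\<bar> + \<bar>Xf z v t \<omega> / disc r t\<bar>" unfolding D_def by (rule abs_triangle_ineq4)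
    then show ?case using elim x_bound[OF elim(2) t, of z v] by simp
  qed
  have Dc: "\<forall>\<omega>\<in>space M. real t < \<tau> \<omega> \<longrightarrow> D \<omega> = d / disc r t - pre z v t / \<alpha> t"
  proof (intro ballI impI)
    fix \<omega> assume w: "\<omega> \<in> space M" and lt: "real t < \<tau> \<omega>"
    have "Xf z v t \<omega> / disc r t = pre z v t / \<alpha> t" using PX[OF w t, of z v] lt by simp
    then show "D \<omega> = d / disc r t - pre z v t / \<alpha> t" unfolding D_def using d w lt by simp
  qed
  have ufm1[measurable]: "(\<lambda>\<omega>. uf t (Y t \<omega> / disc r t)) \<in> borel_measurable M" unfolding uf_def by measurable
  have ufm2[measurable]: "(\<lambda>\<omega>. uf t (Xf z v t \<omega> / disc r t)) \<in> borel_measurable M" unfolding uf_def by measurable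
  show c1: "integrable M (\<lambda>\<omega>. uf t (Y t \<omega> / disc r t))"
  proof (rule integrable_const_bound[OF _ ufm1])
    show "AE \<omega> in M. norm (uf t (Y t \<omega> / disc r t)) \<le> (1 / \<alpha> t) * (1 + exp (\<alpha> t * (C / disc r t)))"
      using yb
    proof eventually_elim
      case (elim \<omega>)
      show ?case unfolding uf_def real_norm_def by (rule uf_bound[OF a elim])
    qed
  qed
  show c2: "integrable M (\<lambda>\<omega>. uf t (Xf z v t \<omega> / disc r t))"
  proof (rule integrable_const_bound[OF _ ufm2])
    show "AE \<omega> in M. norm (uf t (Xf z v t \<omega> / disc r t)) \<le> (1 / \<alpha> t) * (1 + exp (\<alpha> t * Kx z v t))"
      using AE_space
    proof eventually_elim
      case (elim \<omega>)
      show ?case unfolding uf_def real_norm_def by (rule uf_bound[OF a x_bound[OF elim t]])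
    qed
  qed
  show c3: "integrable M (\<lambda>\<omega>. rho z v \<omega> * (Y t \<omega> / disc r t - Xf z v t \<omega> / disc r t))"
    using int_prod[OF rho_meas Dm rho_bound Db] unfolding D_def .
  have c3': "integrable M (\<lambda>\<omega>. gf z v t \<omega> * (Y t \<omega> / disc r t - Xf z v t \<omega> / disc r t))"
    using int_prod[OF gf_meas Dm gf_bound[OF t] Db] unfolding D_def .
  show "integrable M (\<lambda>\<omega>. uf t (Y t \<omega> / disc r t) - uf t (Xf z v t \<omega> / disc r t)
            - gf z v t \<omega> * (Y t \<omega> / disc r t - Xf z v t \<omega> / disc r t))"
    using c1 c2 c3' by (intro Bochner_Integration.integrable_diff)
  have gr: "integral\<^sup>L M (\<lambda>\<omega>. gf z v t \<omega> * D \<omega>) = integral\<^sup>L M (\<lambda>\<omega>. rho z v \<omega> * D \<omega>)"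
    by (rule gf_rho[OF t Dm Db Dc])
  have "integral\<^sup>L M (\<lambda>\<omega>. uf t (Y t \<omega> / disc r t) - uf t (Xf z v t \<omega> / disc r t)
            - gf z v t \<omega> * (Y t \<omega> / disc r t - Xf z v t \<omega> / disc r t))
      = integral\<^sup>L M (\<lambda>\<omega>. uf t (Y t \<omega> / disc r t) - uf t (Xf z v t \<omega> / disc r t))
         - integral\<^sup>L M (\<lambda>\<omega>. gf z v t \<omega> * (Y t \<omega> / disc r t - Xf z v t \<omega> / disc r t))"
    using c1 c2 c3' by (intro Bochner_Integration.integral_diff Bochner_Integration.integrable_diff)
  also have "integral\<^sup>L M (\<lambda>\<omega>. uf t (Y t \<omega> / disc r t) - uf t (Xf z v t \<omega> / disc r t))
      = integral\<^sup>L M (\<lambda>\<omega>. uf t (Y t \<omega> / disc r t)) - integral\<^sup>L M (\<lambda>\<omega>. uf t (Xf z v t \<omega> / disc r t))"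
    using c1 c2 by (rule Bochner_Integration.integral_diff)
  also have "integral\<^sup>L M (\<lambda>\<omega>. gf z v t \<omega> * (Y t \<omega> / disc r t - Xf z v t \<omega> / disc r t))
      = integral\<^sup>L M (\<lambda>\<omega>. rho z v \<omega> * (Y t \<omega> / disc r t - Xf z v t \<omega> / disc r t))"
    using gr unfolding D_def .
  finally show "integral\<^sup>L M (\<lambda>\<omega>. uf t (Y t \<omega> / disc r t) - uf t (Xf z v t \<omega> / disc r t)
            - gf z v t \<omega> * (Y t \<omega> / disc r t - Xf z v t \<omega> / disc r t))
         = integral\<^sup>L M (\<lambda>\<omega>. uf t (Y t \<omega> / disc r t)) - integral\<^sup>L M (\<lambda>\<omega>. uf t (Xf z v t \<omega> / disc r t))
            - integral\<^sup>L M (\<lambda>\<omega>. rho z v \<omega> * (Y t \<omega> / disc r t - Xf z v t \<omega> / disc r t))" .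
  show "\<forall>\<omega>\<in>space M. uf t (Y t \<omega> / disc r t) - uf t (Xf z v t \<omega> / disc r t)
            - gf z v t \<omega> * (Y t \<omega> / disc r t - Xf z v t \<omega> / disc r t) \<le> 0"
  proof
    fix \<omega> assume w: "\<omega> \<in> space M"
    have "uf t (Y t \<omega> / disc r t) \<le> uf t (Xf z v t \<omega> / disc r t) + exp (- \<alpha> t * (Xf z v t \<omega> / disc r t)) * (Y t \<omega> / disc r t - Xf z v t \<omega> / disc r t)"
      unfolding uf_def by (rule util_ineq(1)[OF a])
    then show "uf t (Y t \<omega> / disc r t) - uf t (Xf z v t \<omega> / disc r t)
            - gf z v t \<omega> * (Y t \<omega> / disc r t - Xf z v t \<omega> / disc r t) \<le> 0"
      unfolding gfX[OF w t] by simp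
  qed
  show "\<forall>\<omega>\<in>space M. uf t (Y t \<omega> / disc r t) - uf t (Xf z v t \<omega> / disc r t)
            - gf z v t \<omega> * (Y t \<omega> / disc r t - Xf z v t \<omega> / disc r t) = 0 \<longrightarrow> Y t \<omega> = Xf z v t \<omega>"
  proof (intro ballI impI)
    fix \<omega> assume w: "\<omega> \<in> space M" and F0: "uf t (Y t \<omega> / disc r t) - uf t (Xf z v t \<omega> / disc r t)
            - gf z v t \<omega> * (Y t \<omega> / disc r t - Xf z v t \<omega> / disc r t) = 0"
    show "Y t \<omega> = Xf z v t \<omega>"
    proof (rule ccontr)
      assume ne: "Y t \<omega> \<noteq> Xf z v t \<omega>"
      then have "Y t \<omega> / disc r t \<noteq> Xf z v t \<omega> / disc r t" using dp by (simp add: divide_cancel_right)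
      then have "uf t (Y t \<omega> / disc r t) < uf t (Xf z v t \<omega> / disc r t) + exp (- \<alpha> t * (Xf z v t \<omega> / disc r t)) * (Y t \<omega> / disc r t - Xf z v t \<omega> / disc r t)"
        unfolding uf_def by (rule util_ineq(2)[OF a])
      then show False using F0 unfolding gfX[OF w t] by simp
    qed
  qed
qed

end


context mkt
begin

lemma X_opt:
  assumes Y: "Y \<in> adm M \<tau> T r (\<lambda>\<omega>. v - Zf z \<omega>)"
  shows "EU M T r uf Y \<le> EU M T r uf (Xf z v)"
    and "EU M T r uf Y = EU M T r uf (Xf z v) \<Longrightarrow> \<forall>t\<in>{1..T}. AE \<omega> in M. Y t \<omega> = Xf z v t \<omega>"
proof -
  define F where "F = (\<lambda>t \<omega>. uf t (Y t \<omega> / disc r t) - uf t (Xf z v t \<omega> / disc r t)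
            - gf z v t \<omega> * (Y t \<omega> / disc r t - Xf z v t \<omega> / disc r t))"
  define R where "R = (\<lambda>t \<omega>. rho z v \<omega> * (Y t \<omega> / disc r t - Xf z v t \<omega> / disc r t))"
  have c1: "\<And>t. t \<in> {1..T} \<Longrightarrow> integrable M (\<lambda>\<omega>. uf t (Y t \<omega> / disc r t))"
    using one_t(1)[OF Y] .
  have c2: "\<And>t. t \<in> {1..T} \<Longrightarrow> integrable M (\<lambda>\<omega>. uf t (Xf z v t \<omega> / disc r t))"
    using one_t(2)[OF Y] .
  have c3: "\<And>t. t \<in> {1..T} \<Longrightarrow> integrable M (R t)"
    unfolding R_def using one_t(3)[OF Y] .
  have c4: "\<And>t. t \<in> {1..T} \<Longrightarrow> integrable M (F t)"
    unfolding F_def using one_t(4)[OF Y] .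
  have c5: "\<And>t. t \<in> {1..T} \<Longrightarrow> integral\<^sup>L M (F t) = integral\<^sup>L M (\<lambda>\<omega>. uf t (Y t \<omega> / disc r t))
      - integral\<^sup>L M (\<lambda>\<omega>. uf t (Xf z v t \<omega> / disc r t)) - integral\<^sup>L M (R t)"
    unfolding F_def R_def using one_t(5)[OF Y] .
  have c6: "\<And>t \<omega>. t \<in> {1..T} \<Longrightarrow> \<omega> \<in> space M \<Longrightarrow> F t \<omega> \<le> 0"
    unfolding F_def using one_t(6)[OF Y] by blast
  have c7: "\<And>t \<omega>. t \<in> {1..T} \<Longrightarrow> \<omega> \<in> space M \<Longrightarrow> F t \<omega> = 0 \<Longrightarrow> Y t \<omega> = Xf z v t \<omega>"
    unfolding F_def using one_t(7)[OF Y] by blast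
  have Rm: "\<And>t. t \<in> {1..T} \<Longrightarrow> R t \<in> borel_measurable M" using c3 by auto
  have sumR: "(\<Sum>t=1..T. integral\<^sup>L M (R t)) = 0"
  proof -
    have "(\<Sum>t=1..T. integral\<^sup>L M (R t)) = integral\<^sup>L M (\<lambda>\<omega>. \<Sum>t=1..T. R t \<omega>)"
      using c3 by (rule Bochner_Integration.integral_sum[symmetric])
    also have "\<dots> = integral\<^sup>L M (\<lambda>\<omega>. 0)"
    proof (rule integral_cong_AE)
      show "(\<lambda>\<omega>. \<Sum>t=1..T. R t \<omega>) \<in> borel_measurable M" using Rm by (intro borel_measurable_sum) auto
      show "(\<lambda>\<omega>. 0::real) \<in> borel_measurable M" by simp
      have AEY: "AE \<omega> in M. (\<Sum>t=1..T. Y t \<omega> / disc r t) = v - Zf z \<omega>" using Y unfolding adm_def by auto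
      show "AE \<omega> in M. (\<Sum>t=1..T. R t \<omega>) = 0"
        using AEY AE_space
      proof eventually_elim
        case (elim \<omega>)
        have "(\<Sum>t=1..T. R t \<omega>) = rho z v \<omega> * ((\<Sum>t=1..T. Y t \<omega> / disc r t) - (\<Sum>t=1..T. Xf z v t \<omega> / disc r t))"
          unfolding R_def sum_distrib_left[symmetric] sum_subtractf ..
        also have "\<dots> = 0" using elim budget_pt[OF elim(2), of z v] by simp
        finally show ?case .
      qed
    qed
    finally show ?thesis by simp
  qed
  have diff: "EU M T r uf Y - EU M T r uf (Xf z v) = (\<Sum>t=1..T. integral\<^sup>L M (F t))"
  proof -
    have "EU M T r uf Y - EU M T r uf (Xf z v)
        = (\<Sum>t=1..T. integral\<^sup>L M (\<lambda>\<omega>. uf t (Y t \<omega> / disc r t)) - integral\<^sup>L M (\<lambda>\<omega>. uf t (Xf z v t \<omega> / disc r t)))"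
      unfolding EU_def by (simp add: sum_subtractf)
    also have "\<dots> = (\<Sum>t=1..T. integral\<^sup>L M (F t) + integral\<^sup>L M (R t))"
      by (rule sum.cong) (simp_all add: c5)
    also have "\<dots> = (\<Sum>t=1..T. integral\<^sup>L M (F t))" using sumR by (simp add: sum.distrib)
    finally show ?thesis .
  qed
  have Fle: "integral\<^sup>L M (F t) \<le> 0" if t: "t \<in> {1..T}" for t
  proof -
    have "0 \<le> integral\<^sup>L M (\<lambda>\<omega>. - F t \<omega>)"
      by (rule integral_nonneg_AE) (use c6[OF t] in \<open>auto intro!: AE_I2\<close>)
    then show ?thesis by simp
  qed
  have "(\<Sum>t=1..T. integral\<^sup>L M (F t)) \<le> 0" using Fle by (intro sum_nonpos) auto
  then show "EU M T r uf Y \<le> EU M T r uf (Xf z v)" using diff by simp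
  assume eq: "EU M T r uf Y = EU M T r uf (Xf z v)"
  then have "(\<Sum>t=1..T. - integral\<^sup>L M (F t)) = 0" using diff by (simp add: sum_negf)
  then have all0: "\<forall>t\<in>{1..T}. - integral\<^sup>L M (F t) = 0"
    using Fle by (subst sum_nonneg_eq_0_iff[symmetric]) auto
  show "\<forall>t\<in>{1..T}. AE \<omega> in M. Y t \<omega> = Xf z v t \<omega>"
  proof
    fix t assume t: "t \<in> {1..T}"
    have i: "integrable M (\<lambda>\<omega>. - F t \<omega>)" using c4[OF t] by simp
    have nn: "AE \<omega> in M. 0 \<le> - F t \<omega>" using c6[OF t] by (auto intro!: AE_I2)
    have "integral\<^sup>L M (\<lambda>\<omega>. - F t \<omega>) = 0" using all0 t by simp
    then have "AE \<omega> in M. - F t \<omega> = 0" using integral_nonneg_eq_0_iff_AE[OF i nn] by simp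
    then show "AE \<omega> in M. Y t \<omega> = Xf z v t \<omega>"
      using AE_space by eventually_elim (use c7[OF t] in simp)
  qed
qed

lemma Uval_eq: "Uval M \<tau> T r uf (\<lambda>\<omega>. v - Zf z \<omega>) = EU M T r uf (Xf z v)"
  unfolding Uval_def
proof (rule cSup_eq_maximum)
  show "EU M T r uf (Xf z v) \<in> {EU M T r uf Y |Y. Y \<in> adm M \<tau> T r (\<lambda>\<omega>. v - Zf z \<omega>)}"
    using X_adm by blast
  fix x assume "x \<in> {EU M T r uf Y |Y. Y \<in> adm M \<tau> T r (\<lambda>\<omega>. v - Zf z \<omega>)}"
  then show "x \<le> EU M T r uf (Xf z v)" using X_opt(1) by blast
qed

end


theorem theorem4p3:
  fixes M :: "'a measure" and \<tau> :: "'a \<Rightarrow> real" and T :: nat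
    and r \<alpha> z :: "nat \<Rightarrow> real" and w :: real
  assumes "prob_space M"
    and "T \<ge> 1"
    and "\<tau> \<in> borel_measurable M"
    and "\<forall>\<omega>\<in>space M. \<tau> \<omega> > 0"
    and "\<forall>s\<ge>0. measure M {\<omega>\<in>space M. \<tau> \<omega> = s} = 0"
    and "\<forall>t\<in>{1..T}. r t \<ge> 0"
    and "\<forall>t\<in>{1..T}. \<alpha> t > 0"
  defines "u \<equiv> (\<lambda>t x. (1 / \<alpha> t) * (1 - exp (- \<alpha> t * x)))"
    and "Z \<equiv> (\<lambda>\<omega>. (\<Sum>t=1..T. z t * (if real t - 1 < \<tau> \<omega> \<and> \<tau> \<omega> \<le> real t then 1 else 0))
                    + z (T + 1) * (if real T < \<tau> \<omega> then 1 else 0))"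
    and "X \<equiv> (\<lambda>t \<omega>. let \<beta> = betaw \<alpha> T; h = hdef M \<tau> \<alpha> z T in disc r t / \<alpha> t *
              (\<beta> 1 * (w + ln (h 0))
               - (\<Sum>k=1..t. \<beta> k * z k * (if real k - 1 < \<tau> \<omega> \<and> \<tau> \<omega> \<le> real k then 1 else 0))
               - \<beta> t * ln (h t) * (if real t < \<tau> \<omega> then 1 else 0)
               + (\<Sum>k=1..t-1. \<beta> (k + 1) * \<beta> k / \<alpha> k * ln (h k) * (if real k < \<tau> \<omega> then 1 else 0))))"
  shows "(\<forall>c::real. Uval M \<tau> T r u (\<lambda>\<omega>. w + c - Z \<omega>) = Uval M \<tau> T r u (\<lambda>\<omega>. w)
                  \<longleftrightarrow> c = ln (hdef M \<tau> \<alpha> z T 0))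
    \<and> X \<in> adm M \<tau> T r (\<lambda>\<omega>. w + ln (hdef M \<tau> \<alpha> z T 0) - Z \<omega>)
    \<and> EU M T r u X = Uval M \<tau> T r u (\<lambda>\<omega>. w + ln (hdef M \<tau> \<alpha> z T 0) - Z \<omega>)
    \<and> EU M T r u X = Uval M \<tau> T r u (\<lambda>\<omega>. w)
    \<and> (\<forall>Y\<in>adm M \<tau> T r (\<lambda>\<omega>. w + ln (hdef M \<tau> \<alpha> z T 0) - Z \<omega>).
          EU M T r u Y = Uval M \<tau> T r u (\<lambda>\<omega>. w + ln (hdef M \<tau> \<alpha> z T 0) - Z \<omega>)
          \<longrightarrow> (\<forall>t\<in>{1..T}. AE \<omega> in M. Y t \<omega> = X t \<omega>))"
proof -
  have mk: "mkt M \<tau> T r \<alpha>"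
    unfolding mkt_def mkt_axioms_def using assms(1-4,6,7) by auto
  interpret mkt M \<tau> T r \<alpha> by (rule mk)
  define H0 where "H0 = ln (hdef M \<tau> \<alpha> z T 0)"
  define S where "S = (\<Sum>t=1..T. 1 / \<alpha> t)"
  define b where "b = bt 1"
  have u_eq: "u = uf" unfolding u_def uf_def ..
  have Z_eq: "Z = Zf z" unfolding Z_def by (rule ext) (simp add: Zf_def)
  have X_eq: "X = Xf z (w + H0)"
    unfolding X_def H0_def by (intro ext) (simp add: Xf_def bt_def hz_def Let_def)
  have Sp: "S > 0" unfolding S_def using alpha_pos T1 by (intro sum_pos) auto
  have bp: "b > 0" unfolding b_def using T1 by (intro bt_pos) auto
  have hz0: "ln (hz z 0) = H0" unfolding H0_def hz_def ..
  have UZ: "Uval M \<tau> T r u (\<lambda>\<omega>. w + c - Z \<omega>) = S * (1 - exp (- (b * (w + c) - b * H0)))" for c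
  proof -
    have "Uval M \<tau> T r u (\<lambda>\<omega>. w + c - Z \<omega>) = Uval M \<tau> T r uf (\<lambda>\<omega>. (w + c) - Zf z \<omega>)"
      unfolding u_eq Z_eq ..
    also have "\<dots> = EU M T r uf (Xf z (w + c))" by (rule Uval_eq)
    also have "\<dots> = S * (1 - exp (- (b * (w + c) - b * H0)))"
      unfolding X_EU S_def b_def hz0 ..
    finally show ?thesis .
  qed
  have U0: "Uval M \<tau> T r u (\<lambda>\<omega>. w) = S * (1 - exp (- (b * w)))"
  proof -
    have z0: "(\<lambda>\<omega>. w) = (\<lambda>\<omega>. w - Zf (\<lambda>_. 0) \<omega>)" by (simp add: Zf_def)
    have "Uval M \<tau> T r u (\<lambda>\<omega>. w) = EU M T r uf (Xf (\<lambda>_. 0) w)"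
      unfolding u_eq z0 by (rule Uval_eq)
    also have "\<dots> = S * (1 - exp (- (b * w)))"
      unfolding X_EU S_def b_def hz_zero by simp
    finally show ?thesis .
  qed
  have P1: "\<forall>c::real. Uval M \<tau> T r u (\<lambda>\<omega>. w + c - Z \<omega>) = Uval M \<tau> T r u (\<lambda>\<omega>. w) \<longleftrightarrow> c = H0"
  proof
    fix c :: real
    have "Uval M \<tau> T r u (\<lambda>\<omega>. w + c - Z \<omega>) = Uval M \<tau> T r u (\<lambda>\<omega>. w)
        \<longleftrightarrow> exp (- (b * (w + c) - b * H0)) = exp (- (b * w))"
      unfolding UZ U0 using Sp by auto
    also have "\<dots> \<longleftrightarrow> b * c = b * H0" by (auto simp: algebra_simps)
    also have "\<dots> \<longleftrightarrow> c = H0" using bp by simp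
    finally show "Uval M \<tau> T r u (\<lambda>\<omega>. w + c - Z \<omega>) = Uval M \<tau> T r u (\<lambda>\<omega>. w) \<longleftrightarrow> c = H0" .
  qed
  have W_eq: "(\<lambda>\<omega>. w + H0 - Z \<omega>) = (\<lambda>\<omega>. (w + H0) - Zf z \<omega>)" unfolding Z_eq ..
  have P2: "X \<in> adm M \<tau> T r (\<lambda>\<omega>. w + H0 - Z \<omega>)"
    unfolding X_eq W_eq by (rule X_adm)
  have P3: "EU M T r u X = Uval M \<tau> T r u (\<lambda>\<omega>. w + H0 - Z \<omega>)"
    unfolding X_eq W_eq u_eq by (rule Uval_eq[symmetric])
  have P4: "EU M T r u X = Uval M \<tau> T r u (\<lambda>\<omega>. w)"
    using P3 P1 by simp
  have P5: "\<forall>Y\<in>adm M \<tau> T r (\<lambda>\<omega>. w + H0 - Z \<omega>).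
          EU M T r u Y = Uval M \<tau> T r u (\<lambda>\<omega>. w + H0 - Z \<omega>)
          \<longrightarrow> (\<forall>t\<in>{1..T}. AE \<omega> in M. Y t \<omega> = X t \<omega>)"
  proof (rule ballI, rule impI)
    fix Y assume Y: "Y \<in> adm M \<tau> T r (\<lambda>\<omega>. w + H0 - Z \<omega>)"
      and e: "EU M T r u Y = Uval M \<tau> T r u (\<lambda>\<omega>. w + H0 - Z \<omega>)"
    have Y': "Y \<in> adm M \<tau> T r (\<lambda>\<omega>. (w + H0) - Zf z \<omega>)" using Y unfolding W_eq .
    have "EU M T r uf Y = EU M T r uf (Xf z (w + H0))"
      using e unfolding u_eq W_eq Uval_eq .
    then show "\<forall>t\<in>{1..T}. AE \<omega> in M. Y t \<omega> = X t \<omega>"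
      unfolding X_eq by (rule X_opt(2)[OF Y'])
  qed
  show ?thesis using P1 P2 P3 P4 P5 unfolding H0_def by blast
qed


end
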